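(* For an integer $n>1$ define, for every integer $1\le r\le n-1$, $$E^{C}_{n}(r)=\frac{r}{n}\sum_{k=r+1}^{n}\frac{1-\frac{k}{n}}{k-1},$$ and let $\mathcal{M}(n)$ be a value of $r$ at which $E^C_n$ attains its maximum. Let $\rho=-\frac12 W(-2e^{-2})=0.20318\dots$. Then (i) $\lim_{n\to\infty}\mathcal{M}(n)/n=\rho$; (ii) $\lim_{n\to\infty}E^C_n(\mathcal{M}(n))=\lim_{n\to\infty}E^C_n(\lfloor\rho n\rfloor)=\rho(1-\rho)=0.16190\dots$.
   Context: $W$ denotes the principal (main) branch of the Lambert $W$ function, i.e. the inverse of $z\mapsto ze^z$ on $[-1,\infty)$, so that $z=W(ze^z)$ for $z\ge -1$. *)

theory Defs
  imports Complex_Main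
begin

definition lambertW :: "real \<Rightarrow> real" where
  "lambertW x = (THE w. w \<ge> -1 \<and> w * exp w = x)"

definition EC :: "nat \<Rightarrow> nat \<Rightarrow> real" where
  "EC n r = (real r / real n) * (\<Sum>k=r+1..n. (1 - real k / real n) / (real k - 1))"

definition rho :: real where
  "rho = - (1/2) * lambertW (-2 * exp (-2))"

end

theory Submission
  imports Defs
begin

lemma exp1_gt2: "exp (1::real) > 2"
proof -
  have a: "3/2 \<le> exp (1/2::real)" using exp_ge_add_one_self[of "1/2::real"] by simp
  have "exp (1::real) = exp (1/2) * exp (1/2)" by (simp flip: exp_add)
  also have "\<dots> \<ge> 3/2 * (3/2)" using a by (intro mult_mono) auto
  finally show ?thesis by simp
qed

lemma rho_props: "0 < rho \<and> rho < 1/2 \<and> ln rho = 2*rho - 2"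
proof -
  define F where "F = (\<lambda>w::real. w * exp w)"
  define y where "y = -2 * exp (-2::real)"
  have e1: "exp (-1::real) = exp 1 * exp (-2)" by (simp flip: exp_add)
  have Fm1: "F (-1) < y" unfolding F_def y_def using exp1_gt2 e1
    by (simp add: mult_strict_right_mono)
  have "\<exists>w\<ge>-1. w \<le> 0 \<and> F w = y"
    by (rule IVT) (use Fm1 in \<open>auto simp: F_def y_def\<close>)
  then obtain w where w: "-1 \<le> w" "w \<le> 0" "F w = y" by blast
  have wne: "w \<noteq> -1" using Fm1 w by auto
  have wn0: "w \<noteq> 0" using w by (auto simp: F_def y_def)
  have uniq: "v = w" if v: "-1 \<le> v" "v * exp v = y" for v
  proof (rule ccontr)
    assume ne: "v \<noteq> w"
    have mono: "F a < F b" if "-1 \<le> a" "a < b" for a b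
    proof (rule DERIV_pos_imp_increasing_open[OF that(2)])
      fix x assume "a < x" "x < b"
      then have p: "0 < (1+x) * exp x" using that by simp
      show "\<exists>y. (F has_real_derivative y) (at x) \<and> 0 < y"
        unfolding F_def
        by (intro exI[of _ "(1+x) * exp x"]) (use p in \<open>auto intro!: derivative_eq_intros simp: algebra_simps\<close>)
    next
      show "continuous_on {a..b} F" unfolding F_def by (intro continuous_intros)
    qed
    show False
    proof (cases "v < w")
      case True then show ?thesis using mono[of v w] v w by (simp add: F_def)
    next
      case False then have "w < v" using ne by simp
      then show ?thesis using mono[of w v] v w by (simp add: F_def)
    qed
  qed
  have lw: "lambertW y = w"
    unfolding lambertW_def
  proof (rule the_equality)
    show "-1 \<le> w \<and> w*exp w = y" using w by (simp add: F_def)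
  next
    fix v assume "-1 \<le> v \<and> v * exp v = y" then show "v = w" using uniq by blast
  qed
  have r: "rho = - w / 2" unfolding rho_def lw[unfolded y_def] by simp
  have r1: "0 < rho" "rho < 1/2" using r w wne wn0 by auto
  have "w * exp w = -2 * exp (-2)" using w by (simp add: F_def y_def)
  moreover have wr: "w = -2*rho" using r by simp
  ultimately have "(-2*rho) * exp (-2*rho) = -2 * exp (-2)" by simp
  then have eq: "rho * exp (-2*rho) = exp (-2)" by simp
  have "rho = rho * exp (-2*rho) * exp (2*rho)" by (simp add: mult.assoc flip: exp_add)
  also have "\<dots> = exp (-2) * exp (2*rho)" using eq by simp
  also have "\<dots> = exp (2*rho - 2)" by (simp flip: exp_add)
  finally have "ln rho = ln (exp (2*rho - 2))" by simp
  then have "ln rho = 2*rho - 2" by simp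
  with r1 show ?thesis by simp
qed

definition gfun :: "real \<Rightarrow> real" where "gfun x = x * (- ln x - 1 + x)"

lemma gfun_deriv: "0 < x \<Longrightarrow> (gfun has_real_derivative (- ln x - 2 + 2*x)) (at x)"
  unfolding gfun_def
  by (auto intro!: derivative_eq_intros simp: field_simps)

lemma gfun_rho: "gfun rho = rho * (1 - rho)"
  using rho_props unfolding gfun_def by simp

lemma ln_below: assumes "0 < z" "z < rho" shows "ln z < 2*z - 2"
proof -
  have r: "0 < rho" "rho < 1/2" "ln rho = 2*rho - 2" using rho_props by auto
  have "ln z = ln rho + ln (z/rho)" using assms r by (simp add: ln_div)
  also have "ln (z/rho) \<le> z/rho - 1" using assms r by (intro ln_le_minus_one) simp
  also have "z/rho - 1 = (z - rho)/rho" using r by (simp add: field_simps)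
  also have "(z - rho)/rho < 2*(z - rho)"
  proof -
    have "(z - rho) * (1 - 2*rho) < 0" using assms r by (intro mult_neg_pos) auto
    then have "z - rho < 2*(z-rho)*rho" by (simp add: algebra_simps)
    then show ?thesis using r by (simp add: divide_simps)
  qed
  finally show ?thesis using r by simp
qed

lemma ln_above: assumes "rho < z" "z < 1" shows "2*z - 2 < ln z"
proof -
  have r: "0 < rho" "rho < 1/2" "ln rho = 2*rho - 2" using rho_props by auto
  define v where "v = (\<lambda>x::real. ln x - 2*x + 2)"
  have dv: "(v has_real_derivative (1/x - 2)) (at x)" if "0 < x" for x
    unfolding v_def using that by (auto intro!: derivative_eq_intros)
  show ?thesis
  proof (cases "z < 1/2")
    case True
    obtain t where t: "rho < t" "t < z" "v z - v rho = (z - rho) * (1/t - 2)"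
      using MVT2[of rho z v "\<lambda>x. 1/x - 2"] dv assms r by force
    have "0 < 1/t - 2" using t True r by (simp add: field_simps)
    then have "0 < (z - rho) * (1/t - 2)" using assms by simp
    then show ?thesis using t r by (simp add: v_def)
  next
    case False
    obtain t where t: "z < t" "t < 1" "v 1 - v z = (1 - z) * (1/t - 2)"
      using MVT2[of z 1 v "\<lambda>x. 1/x - 2"] dv assms r by force
    have "1/t - 2 < 0" using t False by (simp add: field_simps)
    then have "(1 - z) * (1/t - 2) < 0" using assms by (simp add: mult_pos_neg)
    then show ?thesis using t by (simp add: v_def)
  qed
qed

lemma gfun_inc: assumes "0 < a" "a < b" "b \<le> rho" shows "gfun a < gfun b"
proof -
  obtain t where t: "a < t" "t < b" "gfun b - gfun a = (b - a) * (- ln t - 2 + 2*t)"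
    using MVT2[of a b gfun "\<lambda>x. - ln x - 2 + 2*x"] gfun_deriv assms by force
  have "ln t < 2*t - 2" using t assms by (intro ln_below) auto
  then have "0 < (b - a) * (- ln t - 2 + 2*t)" using assms by simp
  then show ?thesis using t by simp
qed

lemma gfun_dec: assumes "rho \<le> a" "a < b" "b \<le> 1" shows "gfun b < gfun a"
proof -
  have r: "0 < rho" using rho_props by auto
  obtain t where t: "a < t" "t < b" "gfun b - gfun a = (b - a) * (- ln t - 2 + 2*t)"
    using MVT2[of a b gfun "\<lambda>x. - ln x - 2 + 2*x"] gfun_deriv assms r by force
  have "2*t - 2 < ln t" using t assms by (intro ln_above) auto
  then have "(b - a) * (- ln t - 2 + 2*t) < 0" using assms by (simp add: mult_pos_neg)
  then show ?thesis using t by simp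
qed

lemma gfun_le_max: assumes "0 < x" "x \<le> 1" shows "gfun x \<le> gfun rho"
  using gfun_inc[of x rho] gfun_dec[of rho x] assms by (cases x rho rule: linorder_cases) auto


lemma D_bounds:
  assumes "1 \<le> r" "r \<le> n"
  shows "ln (real n / real r) \<le> (\<Sum>k=r+1..n. 1/(real k - 1)) \<and>
         (\<Sum>k=r+1..n. 1/(real k - 1)) \<le> ln (real n / real r) + 1/real r - 1/real n"
  using assms(2)
proof (induction n rule: dec_induct)
  case base
  then show ?case by simp
next
  case (step m)
  have m: "1 \<le> m" using step assms by simp
  have s: "(\<Sum>k=r+1..Suc m. 1/(real k - 1)) = (\<Sum>k=r+1..m. 1/(real k - 1)) + 1/real m"
    using step by (simp add: sum.cl_ivl_Suc)
  have l: "ln (real (Suc m) / real r) = ln (real m / real r) + ln (1 + 1/real m)"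
    using m assms by (simp add: ln_div ln_mult[symmetric] field_simps del: of_nat_Suc)
  have u1: "ln (1 + 1/real m) \<le> 1/real m" by (intro ln_add_one_self_le_self) simp
  have "ln (real m / (real m + 1)) \<le> real m / (real m + 1) - 1"
    using m by (intro ln_le_minus_one) simp
  moreover have "ln (real m / (real m + 1)) = - ln (1 + 1/real m)"
    using m by (simp add: ln_div field_simps)
  moreover have "real m / (real m + 1) - 1 = - (1/(real m + 1))"
    by (simp add: field_simps)
  ultimately have u2: "1/(real m + 1) \<le> ln (1 + 1/real m)" by linarith
  have q: "1/real (Suc m) = 1/(real m + 1)" by simp
  show ?case using step.IH u1 u2 unfolding s l q by linarith
qed

lemma EC_eq:
  assumes "1 \<le> r" "r \<le> n"
  shows "EC n r = (real r / real n) * ((real n - 1)/real n * (\<Sum>k=r+1..n. 1/(real k - 1))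
                    - (real n - real r)/real n)"
proof -
  have n: "0 < real n" using assms by simp
  have "(\<Sum>k=r+1..n. (1 - real k / real n) / (real k - 1)) =
        (\<Sum>k=r+1..n. (real n - 1)/real n * (1/(real k - 1)) - 1/real n)"
  proof (rule sum.cong)
    fix k assume "k \<in> {r+1..n}"
    then have "real k - 1 \<noteq> 0" using assms by auto
    then show "(1 - real k / real n) / (real k - 1) = (real n - 1)/real n * (1/(real k - 1)) - 1/real n"
      using n by (simp add: field_simps)
  qed simp
  also have "\<dots> = (real n - 1)/real n * (\<Sum>k=r+1..n. 1/(real k - 1)) - (real n - real r)/real n"
    using assms by (simp add: sum_subtractf sum_distrib_left of_nat_diff)
  finally show ?thesis unfolding EC_def by simp
qed

lemma EC_approx:
  assumes "1 \<le> r" "r \<le> n"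
  shows "\<bar>EC n r - gfun (real r / real n)\<bar> \<le> 2 / real n"
proof -
  define D where "D = (\<Sum>k=r+1..n. 1/(real k - 1))"
  define L where "L = ln (real n / real r)"
  define x where "x = real r / real n"
  have n: "1 \<le> real n" "1 \<le> real r" "real r \<le> real n" using assms by auto
  have x: "0 < x" "x \<le> 1" using n by (auto simp: x_def)
  have DB: "L \<le> D" "D \<le> L + 1/real r - 1/real n" using D_bounds[OF assms] by (auto simp: D_def L_def)
  have L0: "0 \<le> L" using n by (simp add: L_def)
  have Lx: "L = - ln x" using n by (simp add: L_def x_def ln_div)
  have xL: "x * L \<le> 1"
  proof -
    have "L \<le> real n / real r - 1" unfolding L_def using n by (intro ln_le_minus_one) simp
    then have "x * L \<le> x * (real n / real r - 1)" using x by (intro mult_left_mono) auto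
    also have "\<dots> = 1 - x" using n by (simp add: x_def field_simps)
    finally show ?thesis using x by simp
  qed
  have xr: "x * (1/real r) = 1/real n" using n by (simp add: x_def)
  have EC: "EC n r = x * ((real n - 1)/real n * D - (1 - x))"
    using EC_eq[OF assms] n by (simp add: D_def x_def diff_divide_distrib)
  have G: "gfun x = x * L - x * (1 - x)" by (simp add: gfun_def Lx algebra_simps)
  have e: "EC n r - gfun x = x * (D - L) - x * D / real n"
    unfolding EC G using n by (simp add: field_simps)
  have nn: "0 \<le> 1/real n" by simp
  have DL1: "D - L \<le> 1/real r" "D \<le> L + 1/real r" using DB nn by linarith+
  have a1: "0 \<le> x * (D - L)" using x DB by simp
  have a2: "x * (D - L) \<le> 1 / real n"
  proof -
    have "x * (D - L) \<le> x * (1/real r)" using x DL1 by (intro mult_left_mono) auto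
    then show ?thesis using xr by simp
  qed
  have b1: "0 \<le> x * D / real n" using x DB L0 n by simp
  have b2: "x * D / real n \<le> 2 / real n"
  proof -
    have "x * D \<le> x * (L + 1/real r)" using x DL1 by (intro mult_left_mono) auto
    also have "\<dots> = x * L + 1/real n" using xr by (simp add: algebra_simps)
    also have "\<dots> \<le> 2"
    proof -
      have "1/real n \<le> 1" using n by simp
      then show ?thesis using xL by linarith
    qed
    finally show ?thesis using n by (simp add: divide_right_mono)
  qed
  have "\<bar>x * (D - L) - x * D / real n\<bar> \<le> 2 / real n" using a1 a2 b1 b2 n
    by (simp add: abs_le_iff)
  then show ?thesis using e by (simp add: x_def)
qed


lemma gfun_cont: "0 < x \<Longrightarrow> isCont gfun x"
  unfolding gfun_def by (intro continuous_intros) auto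

lemma two_over_n: "(\<lambda>n. 2 / real n) \<longlonglongrightarrow> (0::real)"
  by (rule lim_const_over_n)

lemma approx_lim:
  assumes "(\<lambda>n. gfun (x n)) \<longlonglongrightarrow> c"
    and "\<forall>\<^sub>F n in sequentially. \<bar>E n - gfun (x n)\<bar> \<le> 2 / real n"
  shows "E \<longlonglongrightarrow> c"
proof (rule tendsto_sandwich)
  show "\<forall>\<^sub>F n in sequentially. gfun (x n) - 2 / real n \<le> E n"
    using assms(2) by eventually_elim (simp add: abs_le_iff)
  show "\<forall>\<^sub>F n in sequentially. E n \<le> gfun (x n) + 2 / real n"
    using assms(2) by eventually_elim (simp add: abs_le_iff)
  show "(\<lambda>n. gfun (x n) - 2 / real n) \<longlonglongrightarrow> c"
    using tendsto_diff[OF assms(1) two_over_n] by simp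
  show "(\<lambda>n. gfun (x n) + 2 / real n) \<longlonglongrightarrow> c"
    using tendsto_add[OF assms(1) two_over_n] by simp
qed

theorem proposition3:
  fixes M :: "nat \<Rightarrow> nat"
  assumes "\<And>n. n > 1 \<Longrightarrow> 1 \<le> M n \<and> M n \<le> n - 1 \<and>
                 (\<forall>r\<in>{1..n-1}. EC n r \<le> EC n (M n))"
  shows "((\<lambda>n. real (M n) / real n) \<longlonglongrightarrow> rho) \<and>
         ((\<lambda>n. EC n (M n)) \<longlonglongrightarrow> rho * (1 - rho)) \<and>
         ((\<lambda>n. EC n (nat \<lfloor>rho * real n\<rfloor>)) \<longlonglongrightarrow> rho * (1 - rho))"
proof -
  have R: "0 < rho" "rho < 1/2" using rho_props by auto
  define r0 where "r0 = (\<lambda>n. nat \<lfloor>rho * real n\<rfloor>)"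
  define b where "b = (\<lambda>n. real (r0 n) / real n)"
  define a where "a = (\<lambda>n. real (M n) / real n)"
  have r0r: "real (r0 n) = of_int \<lfloor>rho * real n\<rfloor>" for n
    using R by (simp add: r0_def)
  have b_lim: "b \<longlonglongrightarrow> rho"
  proof (rule tendsto_sandwich)
    show "\<forall>\<^sub>F n in sequentially. rho - 1 / real n \<le> b n"
      using eventually_ge_at_top[of "1::nat"]
    proof eventually_elim
      case (elim n)
      have "rho * real n - 1 \<le> real (r0 n)" using r0r[of n] by linarith
      then have "(rho * real n - 1) / real n \<le> b n" unfolding b_def
        by (intro divide_right_mono) auto
      then show ?case using elim by (simp add: field_simps)
    qed
    show "\<forall>\<^sub>F n in sequentially. b n \<le> rho"
      using eventually_ge_at_top[of "1::nat"]
    proof eventually_elim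
      case (elim n)
      have "real (r0 n) \<le> rho * real n" using r0r[of n] by linarith
      then have "b n \<le> rho * real n / real n" unfolding b_def
        by (intro divide_right_mono) auto
      then show ?case using elim by simp
    qed
    show "(\<lambda>n. rho - 1 / real n) \<longlonglongrightarrow> rho"
      using tendsto_diff[OF tendsto_const[of rho] lim_const_over_n[of 1]] by simp
  qed simp
  have gb: "(\<lambda>n. gfun (b n)) \<longlonglongrightarrow> gfun rho"
    by (rule isCont_tendsto_compose[OF gfun_cont[OF R(1)] b_lim])
  define N where "N = nat \<lceil>2 / rho\<rceil> + 3"
  have r0_range: "1 \<le> r0 n \<and> r0 n \<le> n - 1" if "N \<le> n" for n
  proof -
    have "2 / rho \<le> real n" using that unfolding N_def by linarith
    then have "2 \<le> rho * real n" using R by (simp add: field_simps)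
    then have "1 \<le> r0 n" unfolding r0_def by linarith
    moreover have "rho * real n \<le> real n - 1"
    proof -
      have "3 \<le> real n" using that unfolding N_def by linarith
      moreover have "rho * real n \<le> (1/2) * real n" using R by (intro mult_right_mono) auto
      ultimately show ?thesis by linarith
    qed
    then have "r0 n \<le> n - 1" unfolding r0_def using that by (simp add: N_def nat_le_iff of_nat_diff) linarith
    ultimately show ?thesis by simp
  qed
  have ecb: "\<forall>\<^sub>F n in sequentially. \<bar>EC n (r0 n) - gfun (b n)\<bar> \<le> 2 / real n"
    using eventually_ge_at_top[of N]
  proof eventually_elim
    case (elim n)
    then show ?case using r0_range[OF elim] unfolding b_def by (intro EC_approx) auto
  qed
  have part3: "(\<lambda>n. EC n (r0 n)) \<longlonglongrightarrow> gfun rho"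
    by (rule approx_lim[OF gb ecb])
  have Mr: "1 \<le> M n \<and> M n \<le> n - 1 \<and> EC n (r0 n) \<le> EC n (M n)" if "N \<le> n" for n
  proof -
    have "n > 1" using that by (simp add: N_def)
    then show ?thesis using assms[of n] r0_range[OF that] by auto
  qed
  have eca: "\<forall>\<^sub>F n in sequentially. \<bar>EC n (M n) - gfun (a n)\<bar> \<le> 2 / real n"
    using eventually_ge_at_top[of N]
  proof eventually_elim
    case (elim n)
    then show ?case using Mr[OF elim] unfolding a_def by (intro EC_approx) auto
  qed
  have ga: "(\<lambda>n. gfun (a n)) \<longlonglongrightarrow> gfun rho"
  proof (rule tendsto_sandwich)
    show "\<forall>\<^sub>F n in sequentially. gfun (b n) - 2 / real n - 2 / real n \<le> gfun (a n)"
      using eventually_ge_at_top[of N] ecb eca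
    proof eventually_elim
      case (elim n)
      then show ?case using Mr[OF elim(1)] by (simp add: abs_le_iff)
    qed
    show "\<forall>\<^sub>F n in sequentially. gfun (a n) \<le> gfun rho"
      using eventually_ge_at_top[of N]
    proof eventually_elim
      case (elim n)
      have "0 < a n" "a n \<le> 1" using Mr[OF elim] elim by (auto simp: a_def N_def)
      then show ?case by (rule gfun_le_max)
    qed
    show "(\<lambda>n. gfun (b n) - 2 / real n - 2 / real n) \<longlonglongrightarrow> gfun rho"
      using tendsto_diff[OF tendsto_diff[OF gb two_over_n] two_over_n] by simp
  qed simp
  have part2: "(\<lambda>n. EC n (M n)) \<longlonglongrightarrow> gfun rho"
    by (rule approx_lim[OF ga eca])
  have part1: "a \<longlonglongrightarrow> rho"
  proof (rule tendstoI)
    fix e :: real assume e: "0 < e"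
    define e' where "e' = min e (rho/2)"
    have e': "0 < e'" "e' \<le> e" "e' \<le> rho/2" using e R by (auto simp: e'_def)
    have d1: "gfun (rho - e') < gfun rho" using e' R by (intro gfun_inc) auto
    have d2: "gfun (rho + e') < gfun rho" using e' R by (intro gfun_dec) auto
    define d where "d = min (gfun rho - gfun (rho - e')) (gfun rho - gfun (rho + e'))"
    have d: "0 < d" using d1 d2 by (simp add: d_def)
    have ev: "\<forall>\<^sub>F n in sequentially. dist (gfun (a n)) (gfun rho) < d"
      using tendstoD[OF ga d] .
    show "\<forall>\<^sub>F n in sequentially. dist (a n) rho < e"
      using ev eventually_ge_at_top[of N]
    proof eventually_elim
      case (elim n)
      have an: "0 < a n" "a n < 1" using Mr[OF elim(2)] elim(2) by (auto simp: a_def N_def)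
      have cl: "gfun rho - gfun (a n) < d" using elim(1) by (simp add: dist_real_def)
      have "\<not> a n \<le> rho - e'"
      proof
        assume h: "a n \<le> rho - e'"
        have "gfun (a n) \<le> gfun (rho - e')"
          using gfun_inc[of "a n" "rho - e'"] h an e' by (cases "a n = rho - e'") auto
        then show False using cl by (simp add: d_def)
      qed
      moreover have "\<not> a n \<ge> rho + e'"
      proof
        assume h: "a n \<ge> rho + e'"
        have "gfun (a n) \<le> gfun (rho + e')"
          using gfun_dec[of "rho + e'" "a n"] h an e' R by (cases "a n = rho + e'") auto
        then show False using cl by (simp add: d_def)
      qed
      ultimately show ?case using e' by (simp add: dist_real_def abs_less_iff)
    qed
  qed
  show ?thesis using part1 part2 part3 unfolding a_def r0_def gfun_rho by simp
qed

end
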